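(* Let $\gamma>0$ with $\gamma\neq1$, and let $F(\lambda)=\gamma\sin\lambda\cos(\gamma\lambda)-\sin(\gamma\lambda)\cos\lambda$ for $\lambda\in\mathbb{C}$. Then every zero $\lambda_0\neq0$ of $F$ has multiplicity one or three. A zero $\lambda_0\neq0$ has multiplicity three if and only if $\sin\lambda_0=\sin(\gamma\lambda_0)=0$, and in that case $\lambda_0$ is real. If $\gamma$ is irrational, all nonzero zeros of $F$ are simple; if $\gamma$ is rational, $F$ has infinitely many zeros of multiplicity three. *)

theory Defs
  imports "HOL-Analysis.Analysis"
begin

definition zero_multiplicity :: "(complex \<Rightarrow> complex) \<Rightarrow> complex \<Rightarrow> nat \<Rightarrow> bool" where
  "zero_multiplicity f z0 m \<longleftrightarrow>
     (\<forall>k<m. (deriv ^^ k) f z0 = 0) \<and> (deriv ^^ m) f z0 \<noteq> 0"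

end

theory Submission
  imports Defs
begin

lemma d1: "((\<lambda>z. g * sin z * cos (g * z) - sin (g * z) * cos z) has_field_derivative
   ((1 - g^2) * sin z * sin (g*z))) (at z)" for g z :: complex
  by (auto intro!: derivative_eq_intros simp: algebra_simps power2_eq_square)

lemma d2: "((\<lambda>z. (1 - g^2) * sin z * sin (g*z)) has_field_derivative
   ((1 - g^2) * (cos z * sin (g*z) + g * sin z * cos (g*z)))) (at z)" for g z :: complex
  by (auto intro!: derivative_eq_intros simp: algebra_simps power2_eq_square)

lemma d3: "((\<lambda>z. (1 - g^2) * (cos z * sin (g*z) + g * sin z * cos (g*z))) has_field_derivative
   ((1 - g^2) * (2*g*cos z * cos (g*z) - (1+g^2) * sin z * sin (g*z)))) (at z)" for g z :: complex
  by (auto intro!: derivative_eq_intros simp: algebra_simps power2_eq_square)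

theorem proposition1:
  fixes \<gamma> :: real and F :: "complex \<Rightarrow> complex"
  assumes "\<gamma> > 0" and "\<gamma> \<noteq> 1"
    and F_def: "\<And>z. F z = of_real \<gamma> * sin z * cos (of_real \<gamma> * z) - sin (of_real \<gamma> * z) * cos z"
  shows "(\<forall>z. F z = 0 \<and> z \<noteq> 0 \<longrightarrow> zero_multiplicity F z 1 \<or> zero_multiplicity F z 3)
    \<and> (\<forall>z. F z = 0 \<and> z \<noteq> 0 \<longrightarrow>
          (zero_multiplicity F z 3 \<longleftrightarrow> sin z = 0 \<and> sin (of_real \<gamma> * z) = 0))
    \<and> (\<forall>z. F z = 0 \<and> z \<noteq> 0 \<and> zero_multiplicity F z 3 \<longrightarrow> z \<in> \<real>)
    \<and> (\<gamma> \<notin> \<rat> \<longrightarrow> (\<forall>z. F z = 0 \<and> z \<noteq> 0 \<longrightarrow> zero_multiplicity F z 1))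
    \<and> (\<gamma> \<in> \<rat> \<longrightarrow> infinite {z. F z = 0 \<and> z \<noteq> 0 \<and> zero_multiplicity F z 3})"
proof -
  define g where "g = complex_of_real \<gamma>"
  have Feq: "F = (\<lambda>z. g * sin z * cos (g * z) - sin (g * z) * cos z)"
    using F_def g_def by auto
  have D1: "deriv F = (\<lambda>z. (1 - g^2) * sin z * sin (g*z))"
    unfolding Feq by (rule ext, rule DERIV_imp_deriv, rule d1)
  have D2: "deriv (deriv F) = (\<lambda>z. (1 - g^2) * (cos z * sin (g*z) + g * sin z * cos (g*z)))"
    unfolding D1 by (rule ext, rule DERIV_imp_deriv, rule d2)
  have D3: "deriv (deriv (deriv F)) = (\<lambda>z. (1 - g^2) * (2*g*cos z * cos (g*z) - (1+g^2) * sin z * sin (g*z)))"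
    unfolding D2 by (rule ext, rule DERIV_imp_deriv, rule d3)
  have g0: "g \<noteq> 0" using assms(1) g_def by auto
  have g1: "1 - g^2 \<noteq> 0"
  proof
    assume "1 - g^2 = 0"
    hence "\<gamma>^2 = 1" unfolding g_def by (metis eq_iff_diff_eq_0 of_real_eq_1_iff of_real_power)
    thus False using assms(1,2) by (smt (verit) power2_eq_1_iff)
  qed
  have m1: "zero_multiplicity F z 1 \<longleftrightarrow> F z = 0 \<and> \<not> (sin z = 0 \<or> sin (g*z) = 0)" for z
    unfolding zero_multiplicity_def using g1 by (auto simp: D1)
  have key: "F z = 0 \<Longrightarrow> (sin z = 0 \<or> sin (g*z) = 0) \<Longrightarrow> sin z = 0 \<and> sin (g*z) = 0" for z
  proof -
    assume F0: "F z = 0" and h: "sin z = 0 \<or> sin (g*z) = 0"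
    have c1: "sin z = 0 \<Longrightarrow> cos z \<noteq> 0" using sin_cos_squared_add[of z] by auto
    have c2: "sin (g*z) = 0 \<Longrightarrow> cos (g*z) \<noteq> 0" using sin_cos_squared_add[of "g*z"] by auto
    show ?thesis using h F0 c1 c2 g0 unfolding Feq by auto
  qed
  have m3: "zero_multiplicity F z 3 \<longleftrightarrow> F z = 0 \<and> sin z = 0 \<and> sin (g*z) = 0" for z
  proof
    assume "zero_multiplicity F z 3"
    hence "F z = 0" "deriv F z = 0" unfolding zero_multiplicity_def
      by (auto dest: spec[of _ 0] spec[of _ 1])
    hence "F z = 0 \<and> (sin z = 0 \<or> sin (g*z) = 0)" using g1 D1 by auto
    thus "F z = 0 \<and> sin z = 0 \<and> sin (g*z) = 0" using key by blast
  next
    assume h: "F z = 0 \<and> sin z = 0 \<and> sin (g*z) = 0"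
    have c1: "cos z \<noteq> 0" using sin_cos_squared_add[of z] h by auto
    have c2: "cos (g*z) \<noteq> 0" using sin_cos_squared_add[of "g*z"] h by auto
    have "(deriv ^^ k) F z = 0" if "k < 3" for k
    proof -
      have "k = 0 \<or> k = 1 \<or> k = 2" using that by auto
      moreover have "(deriv ^^ 2) F z = 0" using h by (simp add: D2 numeral_eq_Suc)
      moreover have "(deriv ^^ 1) F z = 0" using h by (simp add: D1)
      ultimately show ?thesis using h by auto
    qed
    moreover have "(deriv ^^ 3) F z \<noteq> 0"
      using h c1 c2 g0 g1 by (simp add: numeral_eq_Suc D3)
    ultimately show "zero_multiplicity F z 3" unfolding zero_multiplicity_def by auto
  qed
  have P1: "\<forall>z. F z = 0 \<and> z \<noteq> 0 \<longrightarrow> zero_multiplicity F z 1 \<or> zero_multiplicity F z 3"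
    using m1 m3 key by blast
  have P2: "\<forall>z. F z = 0 \<and> z \<noteq> 0 \<longrightarrow>
          (zero_multiplicity F z 3 \<longleftrightarrow> sin z = 0 \<and> sin (of_real \<gamma> * z) = 0)"
    using m3 g_def by auto
  have P3: "\<forall>z. F z = 0 \<and> z \<noteq> 0 \<and> zero_multiplicity F z 3 \<longrightarrow> z \<in> \<real>"
  proof (intro allI impI)
    fix z assume "F z = 0 \<and> z \<noteq> 0 \<and> zero_multiplicity F z 3"
    hence "sin z = 0" using m3 by blast
    then obtain n :: int where "z = of_real (n*pi)" using sin_eq_0 by blast
    thus "z \<in> \<real>" by simp
  qed
  have P4: "\<gamma> \<notin> \<rat> \<longrightarrow> (\<forall>z. F z = 0 \<and> z \<noteq> 0 \<longrightarrow> zero_multiplicity F z 1)"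
  proof (intro impI allI)
    fix z assume nq: "\<gamma> \<notin> \<rat>" and hz: "F z = 0 \<and> z \<noteq> 0"
    show "zero_multiplicity F z 1"
    proof (rule ccontr)
      assume "\<not> zero_multiplicity F z 1"
      hence "sin z = 0 \<and> sin (g*z) = 0" using m1 key hz by blast
      then obtain n m :: int where n: "z = of_real (n*pi)" and m: "g*z = of_real (m*pi)"
        using sin_eq_0 by meson
      have "n \<noteq> 0" using n hz by auto
      have "of_real (\<gamma>*(n*pi)) = complex_of_real (m*pi)" using m n g_def by simp
      hence "\<gamma>*n = m" using pi_gt_zero
        by (metis mult.assoc mult_cancel_right of_real_eq_iff pi_neq_zero)
      hence "\<gamma> = of_int m / of_int n" using \<open>n \<noteq> 0\<close> by (simp add: field_simps)
      thus False using nq by auto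
    qed
  qed
  have P5: "\<gamma> \<in> \<rat> \<longrightarrow> infinite {z. F z = 0 \<and> z \<noteq> 0 \<and> zero_multiplicity F z 3}"
  proof
    assume "\<gamma> \<in> \<rat>"
    then obtain a b :: int where b: "b > 0" and ab: "\<gamma> = of_int a / of_int b"
      by (metis Rats_cases')
    define f where "f n = complex_of_real (real (Suc n) * of_int b * pi)" for n
    have inj: "inj f" unfolding f_def using b by (auto intro!: injI)
    have sub: "range f \<subseteq> {z. F z = 0 \<and> z \<noteq> 0 \<and> zero_multiplicity F z 3}"
    proof (rule subsetI)
      fix x assume "x \<in> range f"
      then obtain n where xn: "x = f n" by blast
      have s1: "sin (f n) = 0" unfolding f_def sin_eq_0
        by (rule exI[of _ "int (Suc n) * b"]) simp
      have "g * f n = complex_of_real (of_int (int (Suc n) * a) * pi)"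
        unfolding f_def g_def ab using b by simp
      hence s2: "sin (g * f n) = 0" unfolding sin_eq_0 by blast
      have F0: "F (f n) = 0" using s1 s2 Feq by simp
      have "0 < real (Suc n) * of_int b * pi" using b by (intro mult_pos_pos) auto
      hence "real (Suc n) * of_int b * pi \<noteq> 0" by linarith
      hence nz: "f n \<noteq> 0" unfolding f_def by (metis of_real_eq_0_iff)
      have zm: "zero_multiplicity F (f n) 3" using m3 F0 s1 s2 by blast
      show "x \<in> {z. F z = 0 \<and> z \<noteq> 0 \<and> zero_multiplicity F z 3}"
        unfolding mem_Collect_eq xn using F0 nz zm by (intro conjI)
    qed
    have "infinite (range f)" using inj by (rule range_inj_infinite)
    thus "infinite {z. F z = 0 \<and> z \<noteq> 0 \<and> zero_multiplicity F z 3}"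
      using sub finite_subset by blast
  qed
  show ?thesis using P1 P2 P3 P4 P5 by blast
qed

end
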